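(* Let $\mathrm{R}_8=\{a_0,a_1,\dots,a_7\}$ be the dihedral quandle of order $8$, i.e. the set $\mathbb{Z}_8$ with the binary operation $a_i\cdot a_j=a_{(2j-i)\bmod 8}$. Let $\mathbb{Z}[\mathrm{R}_8]$ be its integral quandle ring and $\Delta(\mathrm{R}_8)$ its augmentation ideal. Then \[ \left|\Delta^2(\mathrm{R}_8)/\Delta^3(\mathrm{R}_8)\right| = 16 . \]
   Context: For a quandle $A$, the quandle ring $\mathbb{Z}[A]$ is the free abelian group on $A$, with multiplication defined by bilinear extension of the quandle operation: $\left(\sum_i r_i a_i\right)\cdot\left(\sum_j s_j a_j\right)=\sum_{i,j} r_i s_j (a_i\cdot a_j)$ (this ring is in general non-associative). The augmentation ideal $\Delta(A)$ is the kernel of the augmentation map $\varepsilon:\mathbb{Z}[A]\to\mathbb{Z}$, $\sum_i r_i a_i\mapsto \sum_i r_i$. Its powers are defined by $\Delta^1(A)=\Delta(A)$ and $\Delta^{k+1}(A)=\Delta^k(A)\cdot\Delta(A)$, the additive subgroup of $\mathbb{Z}[A]$ generated by all products $x\cdot y$ with $x\in\Delta^k(A)$, $y\in\Delta(A)$. *)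

theory Defs
  imports Main
begin

text \<open>Integral quandle ring of a finite quandle with carrier A and operation op:
  elements are integer-valued functions supported on A (formal Z-linear combinations).\<close>

definition qring :: "'a set \<Rightarrow> ('a \<Rightarrow> int) set" where
  "qring A = {f. \<forall>x. x \<notin> A \<longrightarrow> f x = 0}"

definition qmult :: "'a set \<Rightarrow> ('a \<Rightarrow> 'a \<Rightarrow> 'a) \<Rightarrow> ('a \<Rightarrow> int) \<Rightarrow> ('a \<Rightarrow> int) \<Rightarrow> ('a \<Rightarrow> int)" where
  "qmult A op f g = (\<lambda>c. \<Sum>a\<in>A. \<Sum>b\<in>A. if op a b = c then f a * g b else 0)"

definition aug :: "'a set \<Rightarrow> ('a \<Rightarrow> int) \<Rightarrow> int" where
  "aug A f = (\<Sum>a\<in>A. f a)"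

definition aug_ideal :: "'a set \<Rightarrow> ('a \<Rightarrow> int) set" where
  "aug_ideal A = {f \<in> qring A. aug A f = 0}"

inductive_set add_span :: "('a \<Rightarrow> int) set \<Rightarrow> ('a \<Rightarrow> int) set" for S where
  zero: "(\<lambda>_. 0) \<in> add_span S"
| gen: "x \<in> S \<Longrightarrow> x \<in> add_span S"
| add: "x \<in> add_span S \<Longrightarrow> y \<in> add_span S \<Longrightarrow> (\<lambda>a. x a + y a) \<in> add_span S"
| neg: "x \<in> add_span S \<Longrightarrow> (\<lambda>a. - x a) \<in> add_span S"

text \<open>Powers of the augmentation ideal: aug_pow A op k = Delta^k for k >= 1
  (the value at k = 0 is an unused convention).\<close>
fun aug_pow :: "'a set \<Rightarrow> ('a \<Rightarrow> 'a \<Rightarrow> 'a) \<Rightarrow> nat \<Rightarrow> ('a \<Rightarrow> int) set" where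
  "aug_pow A op 0 = qring A"
| "aug_pow A op (Suc 0) = aug_ideal A"
| "aug_pow A op (Suc (Suc k)) =
     add_span {qmult A op x y | x y. x \<in> aug_pow A op (Suc k) \<and> y \<in> aug_ideal A}"

definition quot_cosets :: "('a \<Rightarrow> int) set \<Rightarrow> ('a \<Rightarrow> int) set \<Rightarrow> ('a \<Rightarrow> int) set set" where
  "quot_cosets M N = (\<lambda>x. (\<lambda>d. (\<lambda>a. x a + d a)) ` N) ` M"

definition dihedral_carrier :: "int \<Rightarrow> int set" where
  "dihedral_carrier n = {0..<n}"

definition dihedral_op :: "int \<Rightarrow> int \<Rightarrow> int \<Rightarrow> int" where
  "dihedral_op n i j = (2 * j - i) mod n"

end

theory Submission imports Defs begin

definition lin :: "'a set \<Rightarrow> ('a \<Rightarrow> int) \<Rightarrow> ('a \<Rightarrow> int) \<Rightarrow> int" where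
  "lin A w f = (\<Sum>a\<in>A. w a * f a)"

lemma lin_qmult:
  assumes fin: "finite A" and cl: "\<And>a b. a \<in> A \<Longrightarrow> b \<in> A \<Longrightarrow> op a b \<in> A"
  shows "lin A w (qmult A op x y) = (\<Sum>a\<in>A. \<Sum>b\<in>A. x a * y b * w (op a b))"
proof -
  have "lin A w (qmult A op x y) = (\<Sum>c\<in>A. \<Sum>a\<in>A. \<Sum>b\<in>A. if op a b = c then x a * y b * w c else 0)"
    unfolding lin_def qmult_def by (simp add: sum_distrib_left) (intro sum.cong refl; simp add: mult_ac)
  also have "\<dots> = (\<Sum>a\<in>A. \<Sum>b\<in>A. \<Sum>c\<in>A. if op a b = c then x a * y b * w c else 0)"
    by (subst sum.swap, rule sum.cong, simp, subst sum.swap, simp)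
  also have "\<dots> = (\<Sum>a\<in>A. \<Sum>b\<in>A. x a * y b * w (op a b))"
    using fin cl by (intro sum.cong refl) (simp add: sum.delta)
  finally show ?thesis .
qed

lemma aug_shift:
  fixes x h :: "'a \<Rightarrow> int"
  assumes "finite A" "sum x A = 0"
  shows "(\<Sum>a\<in>A. x a * h a) = (\<Sum>a\<in>A. x a * (h a - h z))"
proof -
  have "(\<Sum>a\<in>A. x a * (h a - h z)) = (\<Sum>a\<in>A. x a * h a) - (\<Sum>a\<in>A. x a) * h z"
    by (simp add: right_diff_distrib sum_subtractf sum_distrib_right)
  with assms show ?thesis by simp
qed

lemma pair_dvd:
  fixes u v :: "'a \<Rightarrow> int" and T :: "'a \<Rightarrow> 'a \<Rightarrow> int" and m :: int
  assumes fin: "finite A" and su: "sum u A = 0" and sv: "sum v A = 0"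
  and T: "\<And>a b. a \<in> A \<Longrightarrow> b \<in> A \<Longrightarrow> m dvd (T a b - T a z - T z b + T z z)"
  shows "m dvd (\<Sum>a\<in>A. \<Sum>b\<in>A. u a * v b * T a b)"
proof -
  have "(\<Sum>a\<in>A. \<Sum>b\<in>A. u a * v b * T a b) = (\<Sum>a\<in>A. u a * (\<Sum>b\<in>A. v b * T a b))"
    by (intro sum.cong refl) (simp add: sum_distrib_left mult.assoc)
  also have "\<dots> = (\<Sum>a\<in>A. u a * (\<Sum>b\<in>A. v b * (T a b - T a z)))"
    using aug_shift[OF fin sv] by metis
  also have "\<dots> = (\<Sum>a\<in>A. u a * ((\<Sum>b\<in>A. v b * (T a b - T a z)) - (\<Sum>b\<in>A. v b * (T z b - T z z))))"
    by (rule aug_shift[OF fin su])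
  also have "\<dots> = (\<Sum>a\<in>A. \<Sum>b\<in>A. u a * v b * (T a b - T a z - T z b + T z z))"
    by (simp add: sum_distrib_left algebra_simps sum_subtractf[symmetric])
  finally show ?thesis using T by (auto intro!: dvd_sum)
qed

lemma trip_dvd:
  fixes u v y :: "'a \<Rightarrow> int" and T :: "'a \<Rightarrow> 'a \<Rightarrow> 'a \<Rightarrow> int" and m :: int
  assumes fin: "finite A" and su: "sum u A = 0" and sv: "sum v A = 0" and sy: "sum y A = 0"
  and T: "\<And>a b c. a \<in> A \<Longrightarrow> b \<in> A \<Longrightarrow> c \<in> A \<Longrightarrow>
     m dvd (T a b c - T a b z - T a z c + T a z z - T z b c + T z b z + T z z c - T z z z)"
  shows "m dvd (\<Sum>a\<in>A. \<Sum>b\<in>A. \<Sum>c\<in>A. u a * v b * y c * T a b c)"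
proof -
  define T1 where "T1 a b = (\<Sum>c\<in>A. y c * T a b c)" for a b
  have "(\<Sum>a\<in>A. \<Sum>b\<in>A. \<Sum>c\<in>A. u a * v b * y c * T a b c) = (\<Sum>a\<in>A. \<Sum>b\<in>A. u a * v b * T1 a b)"
    unfolding T1_def by (intro sum.cong refl) (simp add: sum_distrib_left mult_ac)
  moreover have "m dvd (\<Sum>a\<in>A. \<Sum>b\<in>A. u a * v b * T1 a b)"
  proof (rule pair_dvd[OF fin su sv, where z=z])
    fix a b assume ab: "a \<in> A" "b \<in> A"
    have "T1 a b - T1 a z - T1 z b + T1 z z = (\<Sum>c\<in>A. y c * (T a b c - T a z c - T z b c + T z z c))"
      unfolding T1_def by (simp add: sum_distrib_left algebra_simps sum_subtractf[symmetric] sum.distrib[symmetric])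
    also have "\<dots> = (\<Sum>c\<in>A. y c * ((T a b c - T a z c - T z b c + T z z c) - (T a b z - T a z z - T z b z + T z z z)))"
      by (rule aug_shift[OF fin sy])
    also have "m dvd \<dots>"
    proof (rule dvd_sum)
      fix c assume c: "c \<in> A"
      have "(T a b c - T a z c - T z b c + T z z c) - (T a b z - T a z z - T z b z + T z z z)
        = T a b c - T a b z - T a z c + T a z z - T z b c + T z b z + T z z c - T z z z" by simp
      then show "m dvd y c * ((T a b c - T a z c - T z b c + T z z c) - (T a b z - T a z z - T z b z + T z z z))"
        using T[OF ab c] by (metis dvd_mult)
    qed
    finally show "m dvd (T1 a b - T1 a z - T1 z b + T1 z z)" .
  qed
  ultimately show ?thesis by simp
qed
lemma if_add0: "(if P then x + y else 0) = (if P then x else 0) + (if P then y else (0::int))" by simp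
lemma if_neg0: "(if P then - x else 0) = - (if P then x else (0::int))" by simp

lemma qmult_add_left: "qmult A op (\<lambda>c. f c + g c) h = (\<lambda>c. qmult A op f h c + qmult A op g h c)"
  unfolding qmult_def by (simp only: distrib_right if_add0 sum.distrib)

lemma qmult_add_right: "qmult A op h (\<lambda>c. f c + g c) = (\<lambda>c. qmult A op h f c + qmult A op h g c)"
  unfolding qmult_def by (simp only: distrib_left if_add0 sum.distrib)

lemma qmult_neg_left: "qmult A op (\<lambda>c. - f c) h = (\<lambda>c. - qmult A op f h c)"
  unfolding qmult_def by (simp only: mult_minus_left if_neg0 sum_negf)

lemma qmult_zero_left: "qmult A op (\<lambda>c. 0) h = (\<lambda>c. 0)"
  unfolding qmult_def by (simp only: mult_zero_left if_cancel sum.neutral_const)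

lemma qmult_zero_right: "qmult A op h (\<lambda>c. 0) = (\<lambda>c. 0)"
  unfolding qmult_def by (simp only: mult_zero_right if_cancel sum.neutral_const)

lemma qmult_single:
  assumes fin: "finite A" and pq: "p \<in> A" "q \<in> A"
  shows "qmult A op (\<lambda>c. if p = c then k else 0) (\<lambda>c. if q = c then l else 0) = (\<lambda>c. if op p q = c then k * l else 0)"
proof
  fix c
  define X where "X = (if op p q = c then k*l else (0::int))"
  have 1: "\<And>a b. (if op a b = c then (if p = a then k else 0) * (if q = b then l else 0) else 0) =
     (if a = p then (if b = q then X else 0) else 0)" unfolding X_def by auto
  have 2: "\<And>a. (\<Sum>b\<in>A. if a = p then (if b = q then X else 0) else 0) = (if a = p then X else 0)"
    using fin pq by (simp add: sum.delta)
  have "qmult A op (\<lambda>c. if p = c then k else 0) (\<lambda>c. if q = c then l else 0) c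
     = (\<Sum>a\<in>A. \<Sum>b\<in>A. if a = p then (if b = q then X else 0) else 0)"
    unfolding qmult_def by (simp only: 1)
  also have "\<dots> = (\<Sum>a\<in>A. if a = p then X else 0)" by (simp only: 2)
  also have "\<dots> = X" using fin pq by (simp add: sum.delta)
  finally show "qmult A op (\<lambda>c. if p = c then k else 0) (\<lambda>c. if q = c then l else 0) c = (if op p q = c then k * l else 0)"
    unfolding X_def .
qed

definition dv :: "(int \<times> 'a) list \<Rightarrow> 'a \<Rightarrow> int" where
  "dv L c = (\<Sum>(k,p)\<leftarrow>L. if p = c then k else 0)"

lemma dv_Nil: "dv [] = (\<lambda>c. 0)" by (simp add: dv_def fun_eq_iff)
lemma dv_Cons: "dv ((k,p)#L) = (\<lambda>c. (if p = c then k else 0) + dv L c)" by (simp add: dv_def fun_eq_iff)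
lemma dv_append: "dv (L @ M) = (\<lambda>c. dv L c + dv M c)" by (simp add: dv_def fun_eq_iff)

definition dvmul :: "('a \<Rightarrow> 'a \<Rightarrow> 'a) \<Rightarrow> (int \<times> 'a) list \<Rightarrow> (int \<times> 'a) list \<Rightarrow> (int \<times> 'a) list" where
  "dvmul op L M = concat (map (\<lambda>(k,p). map (\<lambda>(l,q). (k*l, op p q)) M) L)"

lemma qmult_single_dv:
  assumes "finite A" "p \<in> A" "snd ` set M \<subseteq> A"
  shows "qmult A op (\<lambda>c. if p = c then k else 0) (dv M) = dv (map (\<lambda>(l,q). (k*l, op p q)) M)"
  using assms(3)
proof (induction M)
  case Nil then show ?case by (simp add: dv_Nil qmult_zero_right)
next
  case (Cons x M)
  obtain l q where x: "x = (l,q)" by (cases x)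
  with Cons show ?case
    by (simp add: dv_Cons qmult_add_right qmult_single[OF assms(1,2)])
qed

lemma qmult_dv:
  assumes "finite A" "snd ` set L \<subseteq> A" "snd ` set M \<subseteq> A"
  shows "qmult A op (dv L) (dv M) = dv (dvmul op L M)"
  using assms(2)
proof (induction L)
  case Nil then show ?case by (simp add: dv_Nil qmult_zero_left dvmul_def)
next
  case (Cons x L)
  obtain k p where x: "x = (k,p)" by (cases x)
  with Cons show ?case
    by (simp add: dv_Cons dvmul_def dv_append qmult_add_left qmult_single_dv[OF assms(1) _ assms(3)])
qed

lemma dv_out: "c \<notin> snd ` set L \<Longrightarrow> dv L c = 0"
  by (induction L) (auto simp: dv_Nil dv_Cons)

lemma sum_single: fixes w :: "'a \<Rightarrow> int" shows "finite A \<Longrightarrow> p \<in> A \<Longrightarrow> (\<Sum>a\<in>A. w a * (if p = a then k else 0)) = k * w p"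
proof -
  assume "finite A" "p \<in> A"
  have "\<And>a. w a * (if p = a then k else 0) = (if p = a then k * w p else (0::int))" by simp
  then have "(\<Sum>a\<in>A. w a * (if p = a then k else 0)) = (\<Sum>a\<in>A. if p = a then k * w p else 0)" by (simp only:)
  also have "\<dots> = k * w p" using \<open>finite A\<close> \<open>p \<in> A\<close> by (simp add: sum.delta)
  finally show ?thesis .
qed

lemma lin_dv: "finite A \<Longrightarrow> snd ` set L \<subseteq> A \<Longrightarrow> lin A w (dv L) = (\<Sum>(k,p)\<leftarrow>L. k * w p)"
proof (induction L)
  case Nil then show ?case by (simp add: lin_def dv_Nil)
next
  case (Cons x L)
  obtain k p where x: "x = (k,p)" by (cases x)
  have "lin A w (dv (x#L)) = (\<Sum>a\<in>A. w a * (if p = a then k else 0)) + lin A w (dv L)"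
    unfolding x lin_def dv_Cons by (simp only: distrib_left sum.distrib)
  also have "\<dots> = k * w p + lin A w (dv L)" using Cons.prems x by (simp add: sum_single)
  finally show ?case using Cons x by simp
qed

lemma sum_dv: "finite A \<Longrightarrow> snd ` set L \<subseteq> A \<Longrightarrow> sum (dv L) A = (\<Sum>(k,p)\<leftarrow>L. k)"
  using lin_dv[of A L "\<lambda>_. 1"] by (simp add: lin_def)

lemma lin_qmult3:
  assumes fin: "finite A" and cl: "\<And>a b. a \<in> A \<Longrightarrow> b \<in> A \<Longrightarrow> op a b \<in> A"
  shows "lin A w (qmult A op (qmult A op u v) y) = (\<Sum>a\<in>A. \<Sum>b\<in>A. \<Sum>c\<in>A. u a * v b * y c * w (op (op a b) c))"
proof -
  have "lin A w (qmult A op (qmult A op u v) y) = (\<Sum>m\<in>A. \<Sum>c\<in>A. qmult A op u v m * y c * w (op m c))"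
    by (rule lin_qmult[OF fin cl])
  also have "\<dots> = (\<Sum>c\<in>A. \<Sum>m\<in>A. y c * ((\<lambda>m. w (op m c)) m * qmult A op u v m))"
    by (subst sum.swap) (intro sum.cong refl, simp add: mult_ac)
  also have "\<dots> = (\<Sum>c\<in>A. y c * lin A (\<lambda>m. w (op m c)) (qmult A op u v))"
    by (simp add: lin_def sum_distrib_left)
  also have "\<dots> = (\<Sum>c\<in>A. y c * (\<Sum>a\<in>A. \<Sum>b\<in>A. u a * v b * w (op (op a b) c)))"
    by (simp add: lin_qmult[OF fin cl])
  also have "\<dots> = (\<Sum>c\<in>A. \<Sum>a\<in>A. \<Sum>b\<in>A. u a * v b * y c * w (op (op a b) c))"
    by (intro sum.cong refl) (simp add: sum_distrib_left mult_ac)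
  also have "\<dots> = (\<Sum>a\<in>A. \<Sum>b\<in>A. \<Sum>c\<in>A. u a * v b * y c * w (op (op a b) c))"
    by (subst sum.swap) (rule sum.cong[OF refl], rule sum.swap)
  finally show ?thesis .
qed

lemma lin_add: "lin A w (\<lambda>a. f a + g a) = lin A w f + lin A w g"
  unfolding lin_def by (simp only: distrib_left sum.distrib)
lemma lin_neg: "lin A w (\<lambda>a. - f a) = - lin A w f"
  unfolding lin_def by (simp only: mult_minus_right sum_negf)
lemma lin_zero: "lin A w (\<lambda>a. 0) = 0"
  unfolding lin_def by (simp only: mult_zero_right sum.neutral_const)

abbreviation "A8 \<equiv> dihedral_carrier 8"
abbreviation "op8 \<equiv> dihedral_op 8"

lemma fin8: "finite A8" by (simp add: dihedral_carrier_def)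
lemma cl8: "op8 a b \<in> A8" by (simp add: dihedral_carrier_def dihedral_op_def)
lemma zero8: "(0::int) \<in> A8" by (simp add: dihedral_carrier_def)
lemma A8_list: "A8 = set [0..7]" by (auto simp: dihedral_carrier_def)

definition vec :: "int list \<Rightarrow> int \<Rightarrow> int" where
  "vec xs a = (if 0 \<le> a \<and> a < int (length xs) then xs ! nat a else 0)"

definition c2 :: "(int \<times> int list) list" where
  "c2 = [(0, [1,0,1,0,1,0,1,0]), (0, [0,1,0,1,0,1,0,1]), (4, [-1,-1,-2,-2,-3,1,0,0])]"
definition c3 :: "(int \<times> int list) list" where
  "c3 = [(0, [1,0,1,0,1,0,1,0]), (0, [0,1,0,1,0,1,0,1]), (2, [-1,-1,-1,1,0,0,0,0]),
         (4, [-1,0,-2,0,1,0,0,0]), (8, [-1,-3,-4,0,-1,1,0,0])]"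

definition inL :: "(int \<times> int list) list \<Rightarrow> (int \<Rightarrow> int) \<Rightarrow> bool" where
  "inL cs f = ((\<forall>x. x \<notin> A8 \<longrightarrow> f x = 0) \<and> (\<forall>(m,ws)\<in>set cs. m dvd lin A8 (vec ws) f))"

lemma chk2_list: "list_all (\<lambda>(m,ws). list_all (\<lambda>a. list_all (\<lambda>b.
    m dvd (vec ws (op8 a b) - vec ws (op8 a 0) - vec ws (op8 0 b) + vec ws (op8 0 0))) [0..7]) [0..7]) c2"
  unfolding c2_def by code_simp

lemma chk3_list: "list_all (\<lambda>(m,ws). list_all (\<lambda>a. list_all (\<lambda>b. list_all (\<lambda>c. let T = (\<lambda>a b c. vec ws (op8 (op8 a b) c)) in
    m dvd (T a b c - T a b 0 - T a 0 c + T a 0 0 - T 0 b c + T 0 b 0 + T 0 0 c - T 0 0 0)) [0..7]) [0..7]) [0..7]) c3"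
  unfolding c3_def by code_simp

lemma chk2: "(m,ws) \<in> set c2 \<Longrightarrow> a \<in> A8 \<Longrightarrow> b \<in> A8 \<Longrightarrow>
    m dvd (vec ws (op8 a b) - vec ws (op8 a 0) - vec ws (op8 0 b) + vec ws (op8 0 0))"
  using chk2_list unfolding A8_list list_all_iff by fastforce

lemma chk3: "(m,ws) \<in> set c3 \<Longrightarrow> a \<in> A8 \<Longrightarrow> b \<in> A8 \<Longrightarrow> c \<in> A8 \<Longrightarrow>
    m dvd (vec ws (op8 (op8 a b) c) - vec ws (op8 (op8 a b) 0) - vec ws (op8 (op8 a 0) c) + vec ws (op8 (op8 a 0) 0)
      - vec ws (op8 (op8 0 b) c) + vec ws (op8 (op8 0 b) 0) + vec ws (op8 (op8 0 0) c) - vec ws (op8 (op8 0 0) 0))"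
  using chk3_list unfolding A8_list list_all_iff Let_def by fastforce

lemma qmult_out: "c \<notin> A8 \<Longrightarrow> qmult A8 op8 x y c = 0"
proof -
  assume c: "c \<notin> A8"
  have "\<And>a b. (if op8 a b = c then x a * y b else 0) = 0" using cl8 c by metis
  then show ?thesis unfolding qmult_def by (simp only: sum.neutral_const)
qed

lemma aug0: "x \<in> aug_ideal A8 \<Longrightarrow> sum x A8 = 0"
  by (simp add: aug_ideal_def aug_def)

lemma gen2: "x \<in> aug_ideal A8 \<Longrightarrow> y \<in> aug_ideal A8 \<Longrightarrow> inL c2 (qmult A8 op8 x y)"
  unfolding inL_def
proof (intro conjI allI impI ballI)
  fix c assume "c \<notin> A8" then show "qmult A8 op8 x y c = 0" by (rule qmult_out)
next
  fix mw assume x: "x \<in> aug_ideal A8" and y: "y \<in> aug_ideal A8" and mw: "mw \<in> set c2"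
  obtain m ws where mw': "mw = (m,ws)" by (cases mw)
  have "m dvd lin A8 (vec ws) (qmult A8 op8 x y)"
    unfolding lin_qmult[OF fin8 cl8]
    by (rule pair_dvd[OF fin8 aug0[OF x] aug0[OF y], where z=0]) (rule chk2, use mw mw' in auto)
  then show "case mw of (m, ws) \<Rightarrow> m dvd lin A8 (vec ws) (qmult A8 op8 x y)" using mw' by simp
qed

lemma gen3: "u \<in> aug_ideal A8 \<Longrightarrow> v \<in> aug_ideal A8 \<Longrightarrow> y \<in> aug_ideal A8 \<Longrightarrow> inL c3 (qmult A8 op8 (qmult A8 op8 u v) y)"
  unfolding inL_def
proof (intro conjI allI impI ballI)
  fix c assume "c \<notin> A8" then show "qmult A8 op8 (qmult A8 op8 u v) y c = 0" by (rule qmult_out)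
next
  fix mw assume u: "u \<in> aug_ideal A8" and v: "v \<in> aug_ideal A8" and y: "y \<in> aug_ideal A8" and mw: "mw \<in> set c3"
  obtain m ws where mw': "mw = (m,ws)" by (cases mw)
  have "m dvd lin A8 (vec ws) (qmult A8 op8 (qmult A8 op8 u v) y)"
    unfolding lin_qmult3[OF fin8 cl8]
    by (rule trip_dvd[OF fin8 aug0[OF u] aug0[OF v] aug0[OF y], where z=0]) (rule chk3, use mw mw' in auto)
  then show "case mw of (m, ws) \<Rightarrow> m dvd lin A8 (vec ws) (qmult A8 op8 (qmult A8 op8 u v) y)" using mw' by simp
qed

lemma inL_zero: "inL cs (\<lambda>a. 0)"
  unfolding inL_def by (auto simp: lin_zero)
lemma inL_add: assumes "inL cs f" "inL cs g" shows "inL cs (\<lambda>a. f a + g a)"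
  unfolding inL_def
proof (intro conjI allI impI ballI)
  fix x assume "x \<notin> A8" then show "f x + g x = 0" using assms unfolding inL_def by auto
next
  fix mw assume mw: "mw \<in> set cs"
  obtain m ws where mw': "mw = (m,ws)" by (cases mw)
  have "m dvd lin A8 (vec ws) f" "m dvd lin A8 (vec ws) g" using assms mw mw' unfolding inL_def by auto
  then show "case mw of (m,ws) \<Rightarrow> m dvd lin A8 (vec ws) (\<lambda>a. f a + g a)" using mw' by (simp add: lin_add)
qed
lemma inL_neg: "inL cs f \<Longrightarrow> inL cs (\<lambda>a. - f a)"
  unfolding inL_def by (auto simp: lin_neg)

declare aug_pow.simps[simp del]

lemma pow2: "aug_pow A op 2 = add_span {qmult A op x y | x y. x \<in> aug_ideal A \<and> y \<in> aug_ideal A}"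
  by (simp add: numeral_2_eq_2 aug_pow.simps)
lemma pow3: "aug_pow A op 3 = add_span {qmult A op x y | x y. x \<in> aug_pow A op 2 \<and> y \<in> aug_ideal A}"
  by (simp add: numeral_3_eq_3 numeral_2_eq_2 aug_pow.simps)

lemma D2_L2: "f \<in> aug_pow A8 op8 2 \<Longrightarrow> inL c2 f"
  unfolding pow2
proof (induction rule: add_span.induct)
  case zero then show ?case by (rule inL_zero)
next
  case (gen x) then show ?case using gen2 by blast
next
  case (add x y) then show ?case by (blast intro: inL_add)
next
  case (neg x) then show ?case by (blast intro: inL_neg)
qed

lemma D2_gen3: "x \<in> aug_pow A8 op8 2 \<Longrightarrow> y \<in> aug_ideal A8 \<Longrightarrow> inL c3 (qmult A8 op8 x y)"
  unfolding pow2
proof (induction rule: add_span.induct)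
  case zero then show ?case by (simp add: qmult_zero_left inL_zero)
next
  case (gen x) then show ?case using gen3 by blast
next
  case (add x1 x2) then show ?case by (simp add: qmult_add_left inL_add)
next
  case (neg x) then show ?case by (simp add: qmult_neg_left inL_neg)
qed

lemma D3_L3: "f \<in> aug_pow A8 op8 3 \<Longrightarrow> inL c3 f"
  unfolding pow3
proof (induction rule: add_span.induct)
  case zero then show ?case by (rule inL_zero)
next
  case (gen x) then show ?case using D2_gen3 by blast
next
  case (add x y) then show ?case by (blast intro: inL_add)
next
  case (neg x) then show ?case by (blast intro: inL_neg)
qed

lemma span_smult_nat: "x \<in> add_span S \<Longrightarrow> (\<lambda>a. int n * x a) \<in> add_span S"
proof (induction n)
  case 0 then show ?case using add_span.zero by simp
next
  case (Suc n)
  then have "(\<lambda>a. int n * x a + x a) \<in> add_span S" using add_span.add by blast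
  moreover have "(\<lambda>a. int n * x a + x a) = (\<lambda>a. int (Suc n) * x a)" by (simp add: algebra_simps)
  ultimately show ?case by simp
qed

lemma span_smult: "x \<in> add_span S \<Longrightarrow> (\<lambda>a. k * x a) \<in> add_span S"
proof (cases "k \<ge> 0")
  case True
  assume x: "x \<in> add_span S"
  have "(\<lambda>a. int (nat k) * x a) \<in> add_span S" by (rule span_smult_nat[OF x])
  then show ?thesis using True by simp
next
  case False
  assume x: "x \<in> add_span S"
  have "(\<lambda>a. - (int (nat (-k)) * x a)) \<in> add_span S" by (rule add_span.neg[OF span_smult_nat[OF x]])
  then show ?thesis using False by simp
qed

lemma lincomb: "(\<forall>(c,g)\<in>set cs. g \<in> add_span S) \<Longrightarrow> (\<lambda>a. \<Sum>(c,g)\<leftarrow>cs. c * g a) \<in> add_span S"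
proof (induction cs)
  case Nil then show ?case using add_span.zero by simp
next
  case (Cons cg cs)
  obtain c g where cg: "cg = (c,g)" by (cases cg)
  have "(\<lambda>a. c * g a) \<in> add_span S" using Cons.prems cg by (auto intro: span_smult)
  moreover have "(\<lambda>a. \<Sum>(c,g)\<leftarrow>cs. c * g a) \<in> add_span S" using Cons by auto
  ultimately have "(\<lambda>a. c * g a + (\<Sum>(c,g)\<leftarrow>cs. c * g a)) \<in> add_span S" by (rule add_span.add)
  then show ?case using cg by simp
qed

definition ev :: "int \<Rightarrow> (int \<times> int) list" where "ev i = [(1,i),(-1,0)]"
definition gg :: "int \<Rightarrow> int \<Rightarrow> int \<Rightarrow> int \<Rightarrow> int" where
  "gg i j k = dv (dvmul op8 (dvmul op8 (ev i) (ev j)) (ev k))"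
definition g2 :: "int \<Rightarrow> int \<Rightarrow> int \<Rightarrow> int" where
  "g2 i j = dv (dvmul op8 (ev i) (ev j))"

lemma dvmul_set: "snd ` set (dvmul op8 L M) \<subseteq> A8"
  unfolding dvmul_def using cl8 by auto

lemma ev_set: "i \<in> A8 \<Longrightarrow> snd ` set (ev i) \<subseteq> A8"
  unfolding ev_def using zero8 by auto

lemma ev_aug: "i \<in> A8 \<Longrightarrow> dv (ev i) \<in> aug_ideal A8"
proof -
  assume i: "i \<in> A8"
  have "\<And>x. x \<notin> A8 \<Longrightarrow> dv (ev i) x = 0"
  proof -
    fix x assume "x \<notin> A8"
    then have "x \<notin> snd ` set (ev i)" using ev_set[OF i] subsetD by metis
    then show "dv (ev i) x = 0" by (rule dv_out)
  qed
  moreover have "sum (dv (ev i)) A8 = 0" using sum_dv[OF fin8 ev_set[OF i]] by (simp add: ev_def)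
  ultimately show ?thesis unfolding aug_ideal_def qring_def aug_def by auto
qed

lemma g2_D2: "i \<in> A8 \<Longrightarrow> j \<in> A8 \<Longrightarrow> g2 i j \<in> aug_pow A8 op8 2"
proof -
  assume ij: "i \<in> A8" "j \<in> A8"
  have "qmult A8 op8 (dv (ev i)) (dv (ev j)) \<in> aug_pow A8 op8 2"
    unfolding pow2 by (rule add_span.gen) (use ev_aug[OF ij(1)] ev_aug[OF ij(2)] in blast)
  then show ?thesis unfolding g2_def using qmult_dv[OF fin8 ev_set ev_set] ij by simp
qed

lemma gg_D3: "i \<in> A8 \<Longrightarrow> j \<in> A8 \<Longrightarrow> k \<in> A8 \<Longrightarrow> gg i j k \<in> aug_pow A8 op8 3"
proof -
  assume ijk: "i \<in> A8" "j \<in> A8" "k \<in> A8"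
  have "qmult A8 op8 (g2 i j) (dv (ev k)) \<in> aug_pow A8 op8 3"
    unfolding pow3 by (rule add_span.gen) (use ev_aug[OF ijk(3)] g2_D2[OF ijk(1,2)] in blast)
  then show ?thesis unfolding gg_def g2_def
    using qmult_dv[OF fin8 dvmul_set ev_set] ijk by simp
qed

lemma fun_eq8: "list_all (\<lambda>a. F a = G a) [0..7] \<Longrightarrow> (\<And>a. a \<notin> A8 \<Longrightarrow> F a = 0 \<and> G a = 0) \<Longrightarrow> F = G"
proof (rule ext)
  fix a
  assume h1: "list_all (\<lambda>a. F a = G a) [0..7]" and h2: "\<And>a. a \<notin> A8 \<Longrightarrow> F a = 0 \<and> G a = 0"
  show "F a = G a"
  proof (cases "a \<in> A8")
    case True
    then have "a \<in> set [0..7]" by (simp only: A8_list)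
    then show ?thesis using h1 by (simp add: list_all_iff)
  next
    case False then show ?thesis using h2 by simp
  qed
qed

lemma vec_out: "length xs = 8 \<Longrightarrow> a \<notin> A8 \<Longrightarrow> vec xs a = 0"
  by (auto simp: vec_def dihedral_carrier_def)

lemma gg_out: "a \<notin> A8 \<Longrightarrow> gg i j k a = 0"
proof -
  assume a: "a \<notin> A8"
  then have "a \<notin> snd ` set (dvmul op8 (dvmul op8 (ev i) (ev j)) (ev k))" using dvmul_set subsetD by metis
  then show ?thesis unfolding gg_def by (rule dv_out)
qed

definition r0 where "r0 = [1, 0, 0, 1, 1, 2, -2, -3::int]"
definition r1 where "r1 = [0, 1, 0, 1, 0, 3, 0, -5::int]"
definition r2 where "r2 = [0, 0, 1, 1, 2, 6, -3, -7::int]"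
definition r3 where "r3 = [0, 0, 0, 2, 0, 0, 0, -2::int]"
definition r4 where "r4 = [0, 0, 0, 0, 4, 4, -4, -4::int]"
definition r5 where "r5 = [0, 0, 0, 0, 0, 8, 0, -8::int]"

lemma sum_list_zero2: "(\<Sum>(c,g)\<leftarrow>cs. (0::int)) = 0" by (induction cs) auto

lemma row_D3:
  assumes "length r = 8" and "\<forall>(c,g)\<in>set cs. g \<in> aug_pow A8 op8 3 \<and> (\<forall>a. a \<notin> A8 \<longrightarrow> g a = 0)"
  and "list_all (\<lambda>a. vec r a = (\<Sum>(c,g)\<leftarrow>cs. c * g a)) [0..7]"
  shows "vec r \<in> aug_pow A8 op8 3"
proof -
  have eq: "vec r = (\<lambda>a. \<Sum>(c,g)\<leftarrow>cs. c * g a)"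
  proof (rule fun_eq8)
    show "list_all (\<lambda>a. vec r a = (\<Sum>(c,g)\<leftarrow>cs. c * g a)) [0..7]" by (rule assms(3))
  next
    fix a assume a: "a \<notin> A8"
    have "(\<Sum>(c,g)\<leftarrow>cs. c * g a) = (\<Sum>(c,g)\<leftarrow>cs. 0)"
      using assms(2) a by (intro arg_cong[where f=sum_list] map_cong) auto
    then show "vec r a = 0 \<and> (\<Sum>(c,g)\<leftarrow>cs. c * g a) = 0"
      using vec_out[OF assms(1) a] sum_list_zero2 by simp
  qed
  have "(\<lambda>a. \<Sum>(c,g)\<leftarrow>cs. c * g a) \<in> aug_pow A8 op8 3"
    unfolding pow3 by (rule lincomb) (use assms(2) in \<open>auto simp: pow3\<close>)
  then show ?thesis using eq by simp
qed

lemma gg_ok: "0 \<le> i \<Longrightarrow> i < 8 \<Longrightarrow> 0 \<le> j \<Longrightarrow> j < 8 \<Longrightarrow> 0 \<le> k \<Longrightarrow> k < 8 \<Longrightarrow> gg i j k \<in> aug_pow A8 op8 3 \<and> (\<forall>a. a \<notin> A8 \<longrightarrow> gg i j k a = 0)"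
  using gg_D3 gg_out by (simp add: dihedral_carrier_def)

lemma r0_D3: "vec r0 \<in> aug_pow A8 op8 3"
  by (rule row_D3[where cs="[(1,gg 5 2 1),(-1,gg 7 1 1)]"]) (simp add: r0_def, simp add: gg_ok, unfold r0_def, code_simp)
lemma r1_D3: "vec r1 \<in> aug_pow A8 op8 3"
  by (rule row_D3[where cs="[(1,gg 1 1 3),(1,gg 5 2 1),(-1,gg 7 1 1)]"]) (simp add: r1_def, simp add: gg_ok, unfold r1_def, code_simp)
lemma r2_D3: "vec r2 \<in> aug_pow A8 op8 3"
  by (rule row_D3[where cs="[(1,gg 1 1 3),(1,gg 3 2 2),(-2,gg 7 1 3),(-1,gg 7 1 2)]"]) (simp add: r2_def, simp add: gg_ok, unfold r2_def, code_simp)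
lemma r3_D3: "vec r3 \<in> aug_pow A8 op8 3"
  by (rule row_D3[where cs="[(1,gg 1 1 2),(-1,gg 7 1 2)]"]) (simp add: r3_def, simp add: gg_ok, unfold r3_def, code_simp)
lemma r4_D3: "vec r4 \<in> aug_pow A8 op8 3"
  by (rule row_D3[where cs="[(-2,gg 7 1 3),(1,gg 3 2 2)]"]) (simp add: r4_def, simp add: gg_ok, unfold r4_def, code_simp)
lemma r5_D3: "vec r5 \<in> aug_pow A8 op8 3"
  by (rule row_D3[where cs="[(2,gg 1 1 3),(-1,gg 1 2 1),(-2,gg 7 1 3),(1,gg 5 2 1)]"]) (simp add: r5_def, simp add: gg_ok, unfold r5_def, code_simp)

lemma sum8: "(\<Sum>a\<in>A8. g a) = g 0 + g 1 + g 2 + g 3 + g 4 + g 5 + g 6 + g 7"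
proof -
  have "A8 = {0,1,2,3,4,5,6,7}" by (auto simp: dihedral_carrier_def)
  then show ?thesis by (simp add: algebra_simps)
qed

lemma lin8: "lin A8 w f = w 0 * f 0 + w 1 * f 1 + w 2 * f 2 + w 3 * f 3 + w 4 * f 4 + w 5 * f 5 + w 6 * f 6 + w 7 * f 7"
  unfolding lin_def by (rule sum8)

lemma upto07: "[0..7] = [0,1,2,3,4,5,6,7::int]" by code_simp

lemma L3_D3:
  assumes f: "inL c3 f"
  shows "f \<in> aug_pow A8 op8 3"
proof -
  have out: "\<And>a. a \<notin> A8 \<Longrightarrow> f a = 0" using f unfolding inL_def by auto
  have cs: "\<forall>(m,ws)\<in>set c3. m dvd lin A8 (vec ws) f" using f unfolding inL_def by auto
  then have "0 dvd lin A8 (vec [1,0,1,0,1,0,1,0]) f \<and> 0 dvd lin A8 (vec [0,1,0,1,0,1,0,1]) f \<and>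
     2 dvd lin A8 (vec [-1,-1,-1,1,0,0,0,0]) f \<and> 4 dvd lin A8 (vec [-1,0,-2,0,1,0,0,0]) f \<and>
     8 dvd lin A8 (vec [-1,-3,-4,0,-1,1,0,0]) f" unfolding c3_def by simp
  then have e1: "f 0 + f 2 + f 4 + f 6 = 0" and e2: "f 1 + f 3 + f 5 + f 7 = 0"
    and d1: "2 dvd (f 3 - f 0 - f 1 - f 2)" and d2: "4 dvd (f 4 - f 0 - 2 * f 2)"
    and d3: "8 dvd (f 5 - f 4 - f 0 - 3 * f 1 - 4 * f 2)"
    by (simp_all add: lin8 vec_def algebra_simps)
  from d1 obtain p where p: "f 3 - f 0 - f 1 - f 2 = 2 * p" by (rule dvdE)
  from d2 obtain q where q: "f 4 - f 0 - 2 * f 2 = 4 * q" by (rule dvdE)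
  from d3 obtain r where r: "f 5 - f 4 - f 0 - 3 * f 1 - 4 * f 2 = 8 * r" by (rule dvdE)
  define cs where "cs = [(f 0, vec r0), (f 1, vec r1), (f 2, vec r2), (p, vec r3), (q, vec r4), (r, vec r5)]"
  have eq: "f = (\<lambda>a. \<Sum>(c,g)\<leftarrow>cs. c * g a)"
  proof (rule fun_eq8)
    show "list_all (\<lambda>a. f a = (\<Sum>(c,g)\<leftarrow>cs. c * g a)) [0..7]"
      unfolding upto07 cs_def using e1 e2 p q r
      by (simp add: vec_def r0_def r1_def r2_def r3_def r4_def r5_def)
  next
    fix a assume a: "a \<notin> A8"
    then show "f a = 0 \<and> (\<Sum>(c,g)\<leftarrow>cs. c * g a) = 0"
      using out[OF a] vec_out[OF _ a] unfolding cs_def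
      by (simp add: r0_def r1_def r2_def r3_def r4_def r5_def)
  qed
  have "(\<lambda>a. \<Sum>(c,g)\<leftarrow>cs. c * g a) \<in> aug_pow A8 op8 3"
    unfolding pow3 by (rule lincomb) (use r0_D3 r1_D3 r2_D3 r3_D3 r4_D3 r5_D3 in \<open>simp add: cs_def pow3\<close>)
  then show ?thesis using eq by simp
qed

abbreviation "D2 \<equiv> aug_pow A8 op8 2"
abbreviation "D3 \<equiv> aug_pow A8 op8 3"

lemma D3_eq: "f \<in> D3 \<longleftrightarrow> inL c3 f"
  using D3_L3 L3_D3 by blast

lemma D3_zero: "(\<lambda>a. 0) \<in> D3" unfolding pow3 by (rule add_span.zero)
lemma D3_add: "f \<in> D3 \<Longrightarrow> g \<in> D3 \<Longrightarrow> (\<lambda>a. f a + g a) \<in> D3" unfolding pow3 by (rule add_span.add)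
lemma D3_neg: "f \<in> D3 \<Longrightarrow> (\<lambda>a. - f a) \<in> D3" unfolding pow3 by (rule add_span.neg)
lemma D2_zero: "(\<lambda>a. 0) \<in> D2" unfolding pow2 by (rule add_span.zero)
lemma D2_add: "f \<in> D2 \<Longrightarrow> g \<in> D2 \<Longrightarrow> (\<lambda>a. f a + g a) \<in> D2" unfolding pow2 by (rule add_span.add)

definition phi :: "(int \<Rightarrow> int) \<Rightarrow> int \<times> int \<times> int" where
  "phi f = (lin A8 (vec [-1,-1,-1,1,0,0,0,0]) f mod 2, lin A8 (vec [-1,0,-2,0,1,0,0,0]) f mod 4,
            lin A8 (vec [-1,-3,-4,0,-1,1,0,0]) f mod 8)"

lemma lin_diff: "lin A w (\<lambda>a. f a - g a) = lin A w f - lin A w g"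
  unfolding lin_def by (simp only: right_diff_distrib sum_subtractf)

lemma mod_add_dvd: "(m::int) dvd d \<Longrightarrow> (b + d) mod m = b mod m"
  by (auto elim!: dvdE)

lemma coset_iff:
  assumes x: "x \<in> D2" and y: "y \<in> D2"
  shows "((\<lambda>d. \<lambda>a. x a + d a) ` D3 = (\<lambda>d. \<lambda>a. y a + d a) ` D3) \<longleftrightarrow> phi x = phi y"
proof
  assume C: "(\<lambda>d. \<lambda>a. x a + d a) ` D3 = (\<lambda>d. \<lambda>a. y a + d a) ` D3"
  have "x \<in> (\<lambda>d. \<lambda>a. x a + d a) ` D3"
    by (rule rev_image_eqI[OF D3_zero]) simp
  then have "x \<in> (\<lambda>d. \<lambda>a. y a + d a) ` D3" using C by (simp only:)
  then obtain d where xd: "x = (\<lambda>a. y a + d a)" and d: "d \<in> D3" by (rule imageE)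
  have "\<forall>(m,ws)\<in>set c3. m dvd lin A8 (vec ws) d" using d unfolding D3_eq inL_def by auto
  then have "2 dvd lin A8 (vec [-1,-1,-1,1,0,0,0,0]) d \<and> 4 dvd lin A8 (vec [-1,0,-2,0,1,0,0,0]) d \<and>
     8 dvd lin A8 (vec [-1,-3,-4,0,-1,1,0,0]) d" unfolding c3_def by simp
  then show "phi x = phi y" unfolding phi_def xd lin_add by (simp add: mod_add_dvd)
next
  assume P: "phi x = phi y"
  define d where "d = (\<lambda>a. x a - y a)"
  have cx: "inL c2 x" and cy: "inL c2 y" using D2_L2 x y by auto
  have "inL c3 d" unfolding inL_def
  proof (intro conjI allI impI ballI)
    fix z assume "z \<notin> A8" then show "d z = 0" using cx cy unfolding inL_def d_def by auto
  next
    fix mw assume mw: "mw \<in> set c3"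
    have "\<forall>(m,ws)\<in>set c2. m dvd lin A8 (vec ws) x" "\<forall>(m,ws)\<in>set c2. m dvd lin A8 (vec ws) y"
      using cx cy unfolding inL_def by auto
    then have z: "lin A8 (vec [1,0,1,0,1,0,1,0]) x = 0" "lin A8 (vec [0,1,0,1,0,1,0,1]) x = 0"
        "lin A8 (vec [1,0,1,0,1,0,1,0]) y = 0" "lin A8 (vec [0,1,0,1,0,1,0,1]) y = 0"
      unfolding c2_def by auto
    have m: "lin A8 (vec [-1,-1,-1,1,0,0,0,0]) x mod 2 = lin A8 (vec [-1,-1,-1,1,0,0,0,0]) y mod 2"
        "lin A8 (vec [-1,0,-2,0,1,0,0,0]) x mod 4 = lin A8 (vec [-1,0,-2,0,1,0,0,0]) y mod 4"
        "lin A8 (vec [-1,-3,-4,0,-1,1,0,0]) x mod 8 = lin A8 (vec [-1,-3,-4,0,-1,1,0,0]) y mod 8"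
      using P unfolding phi_def by auto
    show "case mw of (m, ws) \<Rightarrow> m dvd lin A8 (vec ws) d"
      using mw z m unfolding c3_def d_def lin_diff by (auto simp: mod_eq_dvd_iff)
  qed
  then have dD: "d \<in> D3" using D3_eq by simp
  show "(\<lambda>d. \<lambda>a. x a + d a) ` D3 = (\<lambda>d. \<lambda>a. y a + d a) ` D3"
  proof (intro equalityI subsetI)
    fix z assume "z \<in> (\<lambda>d. \<lambda>a. x a + d a) ` D3"
    then obtain e where e2: "z = (\<lambda>a. x a + e a)" and e1: "e \<in> D3" by (rule imageE)
    note e = e1 e2
    have m1: "(\<lambda>a. d a + e a) \<in> D3" using D3_add[OF dD e(1)] .
    have m2: "z = (\<lambda>a. y a + (d a + e a))" using e(2) unfolding d_def by (simp add: fun_eq_iff)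
    show "z \<in> (\<lambda>d. \<lambda>a. y a + d a) ` D3"
      using rev_image_eqI[of "\<lambda>a. d a + e a" D3 z "\<lambda>d a. y a + d a"] m1 m2 by (simp only:)
  next
    fix z assume "z \<in> (\<lambda>d. \<lambda>a. y a + d a) ` D3"
    then obtain e where e2: "z = (\<lambda>a. y a + e a)" and e1: "e \<in> D3" by (rule imageE)
    note e = e1 e2
    have m1: "(\<lambda>a. e a + - d a) \<in> D3" using D3_add[OF e(1) D3_neg[OF dD]] .
    have m2: "z = (\<lambda>a. x a + (e a + - d a))" using e(2) unfolding d_def by (simp add: fun_eq_iff)
    show "z \<in> (\<lambda>d. \<lambda>a. x a + d a) ` D3"
      using rev_image_eqI[of "\<lambda>a. e a + - d a" D3 z "\<lambda>d a. x a + d a"] m1 m2 by (simp only:)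
  qed
qed

lemma card_quot:
  assumes "\<And>x y. x \<in> X \<Longrightarrow> y \<in> X \<Longrightarrow> (C x = C y \<longleftrightarrow> P x = P y)"
  shows "card (C ` X) = card (P ` X)"
proof -
  define g where "g S = P (SOME x. x \<in> X \<and> C x = S)" for S
  have gC: "g (C x) = P x" if x: "x \<in> X" for x
  proof -
    have "\<exists>x'. x' \<in> X \<and> C x' = C x" using x by blast
    then have "(SOME x'. x' \<in> X \<and> C x' = C x) \<in> X \<and> C (SOME x'. x' \<in> X \<and> C x' = C x) = C x"
      by (rule someI_ex)
    then show ?thesis unfolding g_def using assms x by blast
  qed
  have img: "g ` (C ` X) = P ` X"
    unfolding image_image using gC by (rule image_cong[OF refl])
  have "inj_on g (C ` X)"
  proof (rule inj_onI)
    fix S1 S2 assume "S1 \<in> C ` X" "S2 \<in> C ` X" "g S1 = g S2"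
    then obtain x1 x2 where "x1 \<in> X" "x2 \<in> X" "S1 = C x1" "S2 = C x2" "P x1 = P x2"
      using gC by auto
    then show "S1 = S2" using assms by blast
  qed
  then have "card (g ` (C ` X)) = card (C ` X)" by (rule card_image)
  then show ?thesis using img by simp
qed

definition phiL :: "(int \<times> int) list \<Rightarrow> int \<times> int \<times> int" where
  "phiL L = ((\<Sum>(k,p)\<leftarrow>L. k * vec [-1,-1,-1,1,0,0,0,0] p) mod 2,
             (\<Sum>(k,p)\<leftarrow>L. k * vec [-1,0,-2,0,1,0,0,0] p) mod 4,
             (\<Sum>(k,p)\<leftarrow>L. k * vec [-1,-3,-4,0,-1,1,0,0] p) mod 8)"

lemma phi_dv: "snd ` set L \<subseteq> A8 \<Longrightarrow> phi (dv L) = phiL L"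
  unfolding phi_def phiL_def by (simp add: lin_dv[OF fin8])

lemma rep_in: "phiL L = t \<Longrightarrow> dv L \<in> D2 \<Longrightarrow> snd ` set L \<subseteq> A8 \<Longrightarrow> t \<in> phi ` D2"
  using phi_dv by (metis rev_image_eqI)

lemma g2_D2': "0 \<le> i \<Longrightarrow> i < 8 \<Longrightarrow> 0 \<le> j \<Longrightarrow> j < 8 \<Longrightarrow> dv (dvmul op8 (ev i) (ev j)) \<in> D2"
  using g2_D2[of i j] unfolding g2_def by (simp add: dihedral_carrier_def)

lemma dvmul_set2: "snd ` set (dvmul op8 L M @ dvmul op8 L' M') \<subseteq> A8"
  using dvmul_set[of L M] dvmul_set[of L' M'] by (simp only: set_append image_Un Un_subset_iff)

lemma g2_sum_D2: "0 \<le> i \<Longrightarrow> i < 8 \<Longrightarrow> 0 \<le> j \<Longrightarrow> j < 8 \<Longrightarrow> 0 \<le> k \<Longrightarrow> k < 8 \<Longrightarrow> 0 \<le> l \<Longrightarrow> l < 8 \<Longrightarrow>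
   dv (dvmul op8 (ev i) (ev j) @ dvmul op8 (ev k) (ev l)) \<in> D2"
  unfolding dv_append by (rule D2_add) (rule g2_D2'; simp)+

definition SS :: "(int \<times> int \<times> int) set" where "SS = {(0,0,0), (0,0,4), (0,1,2), (0,1,6), (0,2,0), (0,2,4), (0,3,2), (0,3,6), (1,0,2), (1,0,6), (1,1,0), (1,1,4), (1,2,2), (1,2,6), (1,3,0), (1,3,4)}"

lemma S16_chk: "list_all (\<lambda>a. list_all (\<lambda>b. list_all (\<lambda>c. 4 dvd (c - 2*a - 2*b) \<longrightarrow> (a,b,c) \<in> SS)
   [0..7]) [0..3]) [0..1]"
  unfolding SS_def by code_simp

lemma phi_D2_sub: "x \<in> D2 \<Longrightarrow> phi x \<in> SS"
proof -
  assume x: "x \<in> D2"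
  have cx: "inL c2 x" using D2_L2 x by auto
  have "\<forall>(m,ws)\<in>set c2. m dvd lin A8 (vec ws) x" using cx unfolding inL_def by auto
  then have "4 dvd lin A8 (vec [-1,-1,-2,-2,-3,1,0,0]) x" unfolding c2_def by auto
  moreover have "lin A8 (vec [-1,-3,-4,0,-1,1,0,0]) x - 2 * lin A8 (vec [-1,-1,-1,1,0,0,0,0]) x
     - 2 * lin A8 (vec [-1,0,-2,0,1,0,0,0]) x = lin A8 (vec [-1,-1,-2,-2,-3,1,0,0]) x + 4 * (x 0 + x 2)"
    by (simp add: lin8 vec_def algebra_simps)
  ultimately have "4 dvd (lin A8 (vec [-1,-3,-4,0,-1,1,0,0]) x - 2 * lin A8 (vec [-1,-1,-1,1,0,0,0,0]) x
     - 2 * lin A8 (vec [-1,0,-2,0,1,0,0,0]) x)" by simp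
  then obtain X A B where XAB: "4 dvd (X - 2 * A - 2 * B)" "phi x = (A mod 2, B mod 4, X mod 8)"
    unfolding phi_def by blast
  have d: "4 dvd (X mod 8 - 2 * (A mod 2) - 2 * (B mod 4))" using XAB(1) by presburger
  have r: "A mod 2 \<in> set [0..1]" "B mod 4 \<in> set [0..3]" "X mod 8 \<in> set [0..7]" by auto
  have "\<forall>a\<in>set [0..1]. \<forall>b\<in>set [0..3]. \<forall>c\<in>set [0..7]. 4 dvd (c - 2*a - 2*b) \<longrightarrow> (a,b,c) \<in> SS"
    using S16_chk by (simp only: list_all_iff)
  then show ?thesis unfolding XAB(2) using r d by blast
qed

lemma phi_D2: "phi ` D2 = SS"
proof
  show "phi ` D2 \<subseteq> SS" using phi_D2_sub by blast
next
  have "(0,0,0) \<in> phi ` D2" by (rule rep_in[where L="[]"]) (code_simp, simp add: dv_Nil D2_zero, simp)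
  moreover have "(0,0,4) \<in> phi ` D2" by (rule rep_in[where L="dvmul op8 (ev 2) (ev 2)"]) (code_simp, simp add: g2_D2', rule dvmul_set)
  moreover have "(0,1,2) \<in> phi ` D2" by (rule rep_in[where L="dvmul op8 (ev 3) (ev 1)"]) (code_simp, simp add: g2_D2', rule dvmul_set)
  moreover have "(0,1,6) \<in> phi ` D2" by (rule rep_in[where L="dvmul op8 (ev 7) (ev 1)"]) (code_simp, simp add: g2_D2', rule dvmul_set)
  moreover have "(0,2,0) \<in> phi ` D2" by (rule rep_in[where L="dvmul op8 (ev 1) (ev 2)"]) (code_simp, simp add: g2_D2', rule dvmul_set)
  moreover have "(0,2,4) \<in> phi ` D2" by (rule rep_in[where L="dvmul op8 (ev 3) (ev 2)"]) (code_simp, simp add: g2_D2', rule dvmul_set)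
  moreover have "(0,3,2) \<in> phi ` D2" by (rule rep_in[where L="dvmul op8 (ev 7) (ev 3)"]) (code_simp, simp add: g2_D2', rule dvmul_set)
  moreover have "(0,3,6) \<in> phi ` D2" by (rule rep_in[where L="dvmul op8 (ev 3) (ev 3)"]) (code_simp, simp add: g2_D2', rule dvmul_set)
  moreover have "(1,0,2) \<in> phi ` D2" by (rule rep_in[where L="dvmul op8 (ev 2) (ev 1)"]) (code_simp, simp add: g2_D2', rule dvmul_set)
  moreover have "(1,0,6) \<in> phi ` D2" by (rule rep_in[where L="dvmul op8 (ev 2) (ev 3)"]) (code_simp, simp add: g2_D2', rule dvmul_set)
  moreover have "(1,1,0) \<in> phi ` D2" by (rule rep_in[where L="dvmul op8 (ev 1) (ev 1)"]) (code_simp, simp add: g2_D2', rule dvmul_set)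
  moreover have "(1,1,4) \<in> phi ` D2" by (rule rep_in[where L="dvmul op8 (ev 5) (ev 1)"]) (code_simp, simp add: g2_D2', rule dvmul_set)
  moreover have "(1,2,2) \<in> phi ` D2" by (rule rep_in[where L="dvmul op8 (ev 1) (ev 1) @ dvmul op8 (ev 3) (ev 1)"]) (code_simp, simp add: g2_sum_D2, rule dvmul_set2)
  moreover have "(1,2,6) \<in> phi ` D2" by (rule rep_in[where L="dvmul op8 (ev 1) (ev 1) @ dvmul op8 (ev 7) (ev 1)"]) (code_simp, simp add: g2_sum_D2, rule dvmul_set2)
  moreover have "(1,3,0) \<in> phi ` D2" by (rule rep_in[where L="dvmul op8 (ev 1) (ev 3)"]) (code_simp, simp add: g2_D2', rule dvmul_set)
  moreover have "(1,3,4) \<in> phi ` D2" by (rule rep_in[where L="dvmul op8 (ev 5) (ev 3)"]) (code_simp, simp add: g2_D2', rule dvmul_set)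
  ultimately show "SS \<subseteq> phi ` D2" unfolding SS_def by (simp only: insert_subset empty_subsetI)
qed

theorem theorem2p1:
  shows "card (quot_cosets (aug_pow (dihedral_carrier 8) (dihedral_op 8) 2)
                           (aug_pow (dihedral_carrier 8) (dihedral_op 8) 3)) = 16"
proof -
  have "card (quot_cosets D2 D3) = card (phi ` D2)"
    unfolding quot_cosets_def by (rule card_quot) (rule coset_iff)
  also have "\<dots> = 16" unfolding phi_D2 SS_def by simp
  finally show ?thesis .
qed

end
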